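(* Let $G=\bigl((f_j)_{j=1}^n;(\mu^{R})_{\emptyset\ne R\subseteq[n]}\bigr)$ be an $n$-resource selection game with $f_1,\ldots,f_n$ continuous. Then $P_G\in D_G$ and $E_G(P_G)=h_G$; i.e., $P_G\in\arg\max_{S\in D_G}E_G(S)$ (so $P_G$ is the greatest element of this set of maximizers).
   Context: An $n$-resource selection game is $G=\bigl((f_j)_{j=1}^n;(\mu^{R})_{\emptyset\ne R\subseteq[n]}\bigr)$ with each $f_j:[0,\infty)\to\mathbb{R}$ nondecreasing and each $\mu^R\ge0$. Equalization: for nondecreasing $g_1,\ldots,g_m:[0,\infty)\to\mathbb{R}\cup\{\mathrm{undefined}\}$, $\mathrm{eq}(g_1,\ldots,g_m)(\mu)=g_1(\mu_1)$ if there exist $\mu_1,\ldots,\mu_m\ge0$ summing to $\mu$ with $g_1(\mu_1)=\cdots=g_m(\mu_m)\in\mathbb{R}$, else $\mathrm{undefined}$. For nonempty $S\subseteq[n]$: $E_G(S)=\mathrm{eq}(f_k:k\in S)\bigl(\sum_{\emptyset\ne R\subseteq S}\mu^R\bigr)$; $M_G(S)$ is the set of nonempty $S'\subseteq S$ such that for every $0\le\mu\le\sum_{R\subseteq S,\,R\cap S'\ne\emptyset}\mu^R$, $\mathrm{eq}(f_k:k\in S')(\mu)\ne E_G(S)$ ($\mathrm{undefined}$ differs from every real); $D_G=\{S: E_G(S)\in\mathbb{R},\ M_G(S)=\emptyset\}$; $h_G=\max_{S\in D_G}E_G(S)$; $P_G=\bigcup\{S\in D_G:E_G(S)=h_G\}$.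 *)

theory Defs
  imports Complex_Main
begin

text \<open>An n-resource selection game: resources are indexed by [n] = {1..n};
  f j is the cost function of resource j (only its values on [0,\<infinity>) matter),
  mu R is the demand of the player type whose allowed resources are R.
  The value "undefined" of the paper is modelled by None.\<close>

definition eqz :: "(nat \<Rightarrow> real \<Rightarrow> real) \<Rightarrow> nat set \<Rightarrow> real \<Rightarrow> real option" where
  "eqz f S m =
    (if \<exists>c x. (\<forall>k\<in>S. 0 \<le> x k) \<and> (\<Sum>k\<in>S. x k) = m \<and> (\<forall>k\<in>S. f k (x k) = c)
     then Some (SOME c. \<exists>x. (\<forall>k\<in>S. 0 \<le> x k) \<and> (\<Sum>k\<in>S. x k) = m \<and> (\<forall>k\<in>S. f k (x k) = c))
     else None)"

definition E_G :: "(nat \<Rightarrow> real \<Rightarrow> real) \<Rightarrow> (nat set \<Rightarrow> real) \<Rightarrow> nat set \<Rightarrow> real option" where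
  "E_G f mu S = eqz f S (\<Sum>R\<in>{R. R \<noteq> {} \<and> R \<subseteq> S}. mu R)"

definition M_G :: "(nat \<Rightarrow> real \<Rightarrow> real) \<Rightarrow> (nat set \<Rightarrow> real) \<Rightarrow> nat set \<Rightarrow> nat set set" where
  "M_G f mu S = {S'. S' \<noteq> {} \<and> S' \<subseteq> S \<and>
     (\<forall>m. 0 \<le> m \<and> m \<le> (\<Sum>R\<in>{R. R \<subseteq> S \<and> R \<inter> S' \<noteq> {}}. mu R) \<longrightarrow>
        eqz f S' m \<noteq> E_G f mu S)}"

definition D_G :: "nat \<Rightarrow> (nat \<Rightarrow> real \<Rightarrow> real) \<Rightarrow> (nat set \<Rightarrow> real) \<Rightarrow> nat set set" where
  "D_G n f mu = {S. S \<noteq> {} \<and> S \<subseteq> {1..n} \<and> E_G f mu S \<noteq> None \<and> M_G f mu S = {}}"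

definition h_G :: "nat \<Rightarrow> (nat \<Rightarrow> real \<Rightarrow> real) \<Rightarrow> (nat set \<Rightarrow> real) \<Rightarrow> real" where
  "h_G n f mu = Max ((\<lambda>S. the (E_G f mu S)) ` D_G n f mu)"

definition P_G :: "nat \<Rightarrow> (nat \<Rightarrow> real \<Rightarrow> real) \<Rightarrow> (nat set \<Rightarrow> real) \<Rightarrow> nat set" where
  "P_G n f mu = \<Union>{S \<in> D_G n f mu. E_G f mu S = Some (h_G n f mu)}"

end

theory Submission imports Defs "HOL-Analysis.Analysis" begin

lemma ex_level:
  fixes f :: "nat \<Rightarrow> real \<Rightarrow> real" and T :: "nat set" and a :: "nat \<Rightarrow> real"
  assumes fin: "finite T" and ne: "T \<noteq> {}"
    and mono: "\<forall>k\<in>T. mono_on {0..} (f k)" and cont: "\<forall>k\<in>T. continuous_on {0..} (f k)"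
    and a0: "\<forall>k\<in>T. 0 \<le> a k" and fa: "\<forall>k\<in>T. f k (a k) = c" and am: "(\<Sum>k\<in>T. a k) \<le> m"
  shows "\<exists>d y. c \<le> d \<and> (\<forall>k\<in>T. 0 \<le> y k \<and> f k (y k) = d) \<and> (\<Sum>k\<in>T. y k) = m"
proof (cases "(\<Sum>k\<in>T. a k) = m")
  case True then show ?thesis using a0 fa by (intro exI[of _ c] exI[of _ a]) auto
next
  case False
  hence am': "(\<Sum>k\<in>T. a k) < m" using am by simp
  have monoD: "\<And>k x y. k \<in> T \<Longrightarrow> 0 \<le> x \<Longrightarrow> x \<le> y \<Longrightarrow> f k x \<le> f k y"
    using mono by (meson atLeast_iff mono_onD order_trans)
  have akm: "a k \<le> m" if "k \<in> T" for k
  proof -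
    have "a k \<le> (\<Sum>k\<in>T. a k)" using member_le_sum[of k T a] that a0 fin by auto
    thus ?thesis using am by simp
  qed
  have m0: "0 \<le> m" using ne a0 akm by fastforce
  define N where "N = real (card T)"
  have N0: "N > 0" using fin ne by (simp add: N_def card_gt_0_iff)
  define g where "g d k = Inf ({x. 0 \<le> x \<and> x \<le> m \<and> d \<le> f k x} \<union> {m})" for d k
  define G where "G d = (\<Sum>k\<in>T. g d k)" for d
  define \<Omega> where "\<Omega> = {d. c \<le> d \<and> G d < m}"
  obtain j where j: "j \<in> T" using ne by auto
  have bddb: "bdd_below ({x. 0 \<le> x \<and> x \<le> m \<and> d \<le> f k x} \<union> {m})" for d k
    by (rule bdd_belowI[of _ 0]) (use m0 in auto)
  have g_le: "g d k \<le> x" if "0 \<le> x" "x \<le> m" "d \<le> f k x" for d k x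
    unfolding g_def by (rule cInf_lower) (use that bddb in auto)
  have g_lem: "g d k \<le> m" for d k
    unfolding g_def by (rule cInf_lower) (use bddb in auto)
  have g_lower: "z \<le> g d k" if "z \<le> m" "\<And>x. 0 \<le> x \<Longrightarrow> x \<le> m \<Longrightarrow> d \<le> f k x \<Longrightarrow> z \<le> x" for z d k
    unfolding g_def by (rule cInf_greatest) (use that in auto)
  have g_ge: "0 \<le> g d k" for d k
    by (rule g_lower) (use m0 in auto)
  have g_m: "g d k = m" if "k \<in> T" "f k m < d" for d k
  proof -
    have "m \<le> g d k"
    proof (rule g_lower)
      fix x assume "0 \<le> x" "x \<le> m" "d \<le> f k x"
      thus "m \<le> x" using monoD[OF that(1), of x m] that(2) by linarith
    qed simp
    thus ?thesis using g_lem[of d k] by simp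
  qed
  have G_ge: "g d k \<le> G d" if "k \<in> T" for d k
    unfolding G_def using member_le_sum[of k T "g d"] that fin g_ge by auto
  have c\<Omega>: "c \<in> \<Omega>"
  proof -
    have "G c \<le> (\<Sum>k\<in>T. a k)" unfolding G_def
      by (rule sum_mono) (use g_le a0 akm fa in auto)
    thus ?thesis using am' by (simp add: \<Omega>_def)
  qed
  have bdd: "d \<le> f j m" if "d \<in> \<Omega>" for d
  proof (rule ccontr)
    assume "\<not> d \<le> f j m"
    hence "g d j = m" using g_m j by simp
    hence "m \<le> G d" using G_ge[OF j, of d] by simp
    thus False using that by (simp add: \<Omega>_def)
  qed
  have bdd\<Omega>: "bdd_above \<Omega>" using bdd by (rule bdd_aboveI)
  define ds where "ds = Sup \<Omega>"
  have ds_ge: "c \<le> ds" unfolding ds_def by (rule cSup_upper[OF c\<Omega> bdd\<Omega>])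
  have ds_approx: "\<exists>d\<in>\<Omega>. e < d" if "e < ds" for e
    using that less_cSup_iff[of \<Omega> e] c\<Omega> bdd\<Omega> unfolding ds_def by auto
  have above: "m \<le> G d" if "ds < d" for d
  proof (rule ccontr)
    assume "\<not> m \<le> G d"
    hence "d \<in> \<Omega>" using ds_ge that by (simp add: \<Omega>_def)
    hence "d \<le> ds" unfolding ds_def by (rule cSup_upper[OF _ bdd\<Omega>])
    thus False using that by simp
  qed
  have fm: "ds \<le> f k m" if "k \<in> T" for k
  proof (rule ccontr)
    assume "\<not> ds \<le> f k m"
    then obtain d where d: "d \<in> \<Omega>" "f k m < d" using ds_approx by force
    hence "g d k = m" using g_m that by simp
    hence "m \<le> G d" using G_ge[OF that, of d] by simp
    thus False using d by (simp add: \<Omega>_def)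
  qed
  have f0: "f k 0 \<le> ds" if "k \<in> T" for k
    using monoD[OF that, of 0 "a k"] a0 fa that ds_ge by auto
  define Z where "Z k = {x \<in> {0..m}. f k x = ds}" for k
  have Zne: "Z k \<noteq> {}" if kT: "k \<in> T" for k
  proof -
    have "continuous_on {0..m} (f k)"
      using cont kT by (meson atLeastAtMost_iff atLeast_iff continuous_on_subset subsetI)
    then obtain x where "0 \<le> x" "x \<le> m" "f k x = ds"
      using IVT'[of "f k" 0 ds m] f0[OF kT] fm[OF kT] m0 by auto
    thus ?thesis by (auto simp: Z_def)
  qed
  have Zcl: "closed (Z k)" if "k \<in> T" for k
  proof -
    have "continuous_on {0..m} (f k)"
      using cont that by (meson atLeastAtMost_iff atLeast_iff continuous_on_subset subsetI)
    thus ?thesis unfolding Z_def by (intro continuous_closed_preimage_constant) auto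
  qed
  define lo where "lo k = Inf (Z k)" for k
  define hi where "hi k = Sup (Z k)" for k
  have loZ: "lo k \<in> Z k" if "k \<in> T" for k
    unfolding lo_def by (rule closed_contains_Inf) (use Zne[OF that] Zcl[OF that] in \<open>auto simp: Z_def intro: bdd_belowI[of _ 0]\<close>)
  have hiZ: "hi k \<in> Z k" if "k \<in> T" for k
    unfolding hi_def by (rule closed_contains_Sup) (use Zne[OF that] Zcl[OF that] in \<open>auto simp: Z_def intro: bdd_aboveI[of _ m]\<close>)
  have lo_min: "lo k \<le> x" if "k \<in> T" "x \<in> Z k" for k x
    unfolding lo_def by (rule cInf_lower) (use that in \<open>auto simp: Z_def intro: bdd_belowI[of _ 0]\<close>)
  have hi_max: "x \<le> hi k" if "k \<in> T" "x \<in> Z k" for k x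
    unfolding hi_def by (rule cSup_upper) (use that in \<open>auto simp: Z_def intro: bdd_aboveI[of _ m]\<close>)
  have below_lo: "f k x < ds" if "k \<in> T" "0 \<le> x" "x < lo k" for k x
  proof -
    have "lo k \<le> m" "f k (lo k) = ds" using loZ[OF that(1)] by (auto simp: Z_def)
    hence "f k x \<le> ds" using monoD[OF that(1) that(2), of "lo k"] that by simp
    moreover have "f k x \<noteq> ds"
    proof
      assume "f k x = ds"
      hence "x \<in> Z k" using that \<open>lo k \<le> m\<close> by (auto simp: Z_def)
      thus False using lo_min[OF that(1)] that(3) by force
    qed
    ultimately show ?thesis by simp
  qed
  have above_hi: "ds < f k x" if "k \<in> T" "x \<le> m" "hi k < x" for k x
  proof -
    have "0 \<le> hi k" "f k (hi k) = ds" using hiZ[OF that(1)] by (auto simp: Z_def)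
    hence "ds \<le> f k x" using monoD[OF that(1) \<open>0 \<le> hi k\<close>, of x] that by simp
    moreover have "f k x \<noteq> ds"
    proof
      assume "f k x = ds"
      hence "x \<in> Z k" using that \<open>0 \<le> hi k\<close> by (auto simp: Z_def)
      thus False using hi_max[OF that(1)] that(3) by force
    qed
    ultimately show ?thesis by simp
  qed
  have lohi: "0 \<le> lo k" "lo k \<le> hi k" "hi k \<le> m" "f k (lo k) = ds" "f k (hi k) = ds" if "k \<in> T" for k
    using loZ[OF that] hiZ[OF that] lo_min[OF that] by (auto simp: Z_def)
  have sumlo: "(\<Sum>k\<in>T. lo k) \<le> m"
  proof (rule ccontr)
    assume H: "\<not> (\<Sum>k\<in>T. lo k) \<le> m"
    define \<delta> where "\<delta> = ((\<Sum>k\<in>T. lo k) - m) / (2 * N)"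
    have \<delta>0: "\<delta> > 0" using H N0 by (simp add: \<delta>_def)
    define x' where "x' k = max 0 (lo k - \<delta>)" for k
    have "(\<Sum>k\<in>T. lo k - \<delta>) \<le> (\<Sum>k\<in>T. x' k)" by (rule sum_mono) (simp add: x'_def)
    moreover have "(\<Sum>k\<in>T. lo k - \<delta>) = (\<Sum>k\<in>T. lo k) - N * \<delta>"
      by (simp add: sum_subtractf N_def)
    moreover have "N * \<delta> = ((\<Sum>k\<in>T. lo k) - m) / 2" using N0 by (simp add: \<delta>_def)
    ultimately have sx: "m < (\<Sum>k\<in>T. x' k)" using H by argo
    define e where "e k = (if 0 < x' k then f k (x' k) else c - 1)" for k
    have ek: "e k < ds" if "k \<in> T" for k
    proof (cases "0 < x' k")
      case True
      hence "x' k = lo k - \<delta>" by (simp add: x'_def)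
      thus ?thesis using True below_lo[OF that, of "x' k"] \<delta>0 by (simp add: e_def)
    qed (use ds_ge in \<open>simp add: e_def\<close>)
    have "Max (e ` T) < ds" using fin ne ek by simp
    then obtain d where d: "d \<in> \<Omega>" "Max (e ` T) < d" using ds_approx by blast
    have "x' k \<le> g d k" if "k \<in> T" for k
    proof (cases "0 < x' k")
      case True
      hence x'e: "x' k = lo k - \<delta>" by (simp add: x'_def)
      have "e k \<le> Max (e ` T)" using fin that by simp
      hence fx: "f k (x' k) < d" using d True by (simp add: e_def)
      show ?thesis
      proof (rule g_lower)
        show "x' k \<le> m" using x'e lohi[OF that] \<delta>0 by simp
        fix x assume "0 \<le> x" "x \<le> m" "d \<le> f k x"
        show "x' k \<le> x"
        proof (rule ccontr)
          assume "\<not> x' k \<le> x"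
          hence "f k x \<le> f k (x' k)" using monoD[OF that \<open>0 \<le> x\<close>, of "x' k"] by simp
          thus False using fx \<open>d \<le> f k x\<close> by simp
        qed
      qed
    next
      case False
      thus ?thesis using g_ge[of d k] by (simp add: x'_def)
    qed
    hence "(\<Sum>k\<in>T. x' k) \<le> G d" unfolding G_def by (rule sum_mono)
    thus False using sx d by (simp add: \<Omega>_def)
  qed
  have sumhi: "m \<le> (\<Sum>k\<in>T. hi k)"
  proof (rule ccontr)
    assume H: "\<not> m \<le> (\<Sum>k\<in>T. hi k)"
    define \<delta> where "\<delta> = (m - (\<Sum>k\<in>T. hi k)) / (2 * N)"
    have \<delta>0: "\<delta> > 0" using H N0 by (simp add: \<delta>_def)
    define x'' where "x'' k = min m (hi k + \<delta>)" for k
    have "(\<Sum>k\<in>T. x'' k) \<le> (\<Sum>k\<in>T. hi k + \<delta>)" by (rule sum_mono) (simp add: x''_def)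
    moreover have "(\<Sum>k\<in>T. hi k + \<delta>) = (\<Sum>k\<in>T. hi k) + N * \<delta>"
      by (simp add: sum.distrib N_def)
    moreover have "N * \<delta> = (m - (\<Sum>k\<in>T. hi k)) / 2" using N0 by (simp add: \<delta>_def)
    ultimately have sx: "(\<Sum>k\<in>T. x'' k) < m" using H by argo
    define e where "e k = (if hi k < m then f k (x'' k) else ds + 1)" for k
    have ek: "ds < e k" if "k \<in> T" for k
    proof (cases "hi k < m")
      case True
      thus ?thesis using above_hi[OF that, of "x'' k"] \<delta>0 by (simp add: e_def x''_def)
    qed (simp add: e_def)
    have emin: "ds < Min (e ` T)" using fin ne ek by simp
    define d where "d = (ds + Min (e ` T)) / 2"
    have d1: "ds < d" and d2: "d < Min (e ` T)" using emin by (simp_all add: d_def)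
    have "g d k \<le> x'' k" if "k \<in> T" for k
    proof (cases "hi k < m")
      case True
      have "e k \<ge> Min (e ` T)" using fin that by simp
      hence "d \<le> f k (x'' k)" using d2 True by (simp add: e_def)
      moreover have "0 \<le> x'' k" "x'' k \<le> m" using lohi[OF that] \<delta>0 m0 by (auto simp: x''_def)
      ultimately show ?thesis using g_le by blast
    next
      case False
      hence "hi k = m" using lohi[OF that] by simp
      hence "x'' k = m" using \<delta>0 by (simp add: x''_def)
      thus ?thesis using g_lem by simp
    qed
    hence "G d \<le> (\<Sum>k\<in>T. x'' k)" unfolding G_def by (rule sum_mono)
    thus False using sx above[OF d1] by simp
  qed
  show ?thesis
  proof (cases "(\<Sum>k\<in>T. hi k) = (\<Sum>k\<in>T. lo k)")
    case True
    hence "(\<Sum>k\<in>T. lo k) = m" using sumlo sumhi by simp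
    thus ?thesis using lohi ds_ge by (intro exI[of _ ds] exI[of _ lo]) auto
  next
    case False
    define \<theta> where "\<theta> = (m - (\<Sum>k\<in>T. lo k)) / ((\<Sum>k\<in>T. hi k) - (\<Sum>k\<in>T. lo k))"
    have sle: "(\<Sum>k\<in>T. lo k) \<le> (\<Sum>k\<in>T. hi k)" by (rule sum_mono) (use lohi in auto)
    hence pos: "0 < (\<Sum>k\<in>T. hi k) - (\<Sum>k\<in>T. lo k)" using False by simp
    have th0: "0 \<le> \<theta>" "\<theta> \<le> 1" using sumlo sumhi pos by (auto simp: \<theta>_def field_simps)
    define y where "y k = lo k + \<theta> * (hi k - lo k)" for k
    have "(\<Sum>k\<in>T. y k) = (\<Sum>k\<in>T. lo k) + \<theta> * ((\<Sum>k\<in>T. hi k) - (\<Sum>k\<in>T. lo k))"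
      by (simp add: y_def sum.distrib flip: sum_distrib_left sum_subtractf)
    also have "\<dots> = m" using pos by (simp add: \<theta>_def)
    finally have sy: "(\<Sum>k\<in>T. y k) = m" .
    have yk: "0 \<le> y k \<and> f k (y k) = ds" if "k \<in> T" for k
    proof -
      have t: "0 \<le> \<theta> * (hi k - lo k)" "\<theta> * (hi k - lo k) \<le> hi k - lo k"
        using th0 lohi[OF that] by (auto simp: mult_left_le_one_le)
      hence "lo k \<le> y k" "y k \<le> hi k" by (auto simp: y_def)
      hence "f k (lo k) \<le> f k (y k)" "f k (y k) \<le> f k (hi k)"
        using monoD[OF that] lohi[OF that] by (meson order_trans)+
      thus ?thesis using lohi[OF that] \<open>lo k \<le> y k\<close> by simp
    qed
    show ?thesis using yk sy ds_ge by (intro exI[of _ ds] exI[of _ y]) auto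
  qed
qed


definition msum :: "(nat set \<Rightarrow> real) \<Rightarrow> nat set \<Rightarrow> real" where
  "msum mu S = (\<Sum>R\<in>{R. R \<noteq> {} \<and> R \<subseteq> S}. mu R)"
definition cross :: "(nat set \<Rightarrow> real) \<Rightarrow> nat set \<Rightarrow> nat set \<Rightarrow> real" where
  "cross mu S S' = (\<Sum>R\<in>{R. R \<subseteq> S \<and> R \<inter> S' \<noteq> {}}. mu R)"

lemma E_G_msum: "E_G f mu S = eqz f S (msum mu S)"
  by (simp add: E_G_def msum_def)

lemma M_G_cross: "M_G f mu S = {S'. S' \<noteq> {} \<and> S' \<subseteq> S \<and>
     (\<forall>m. 0 \<le> m \<and> m \<le> cross mu S S' \<longrightarrow> eqz f S' m \<noteq> E_G f mu S)}"
  by (simp add: M_G_def cross_def)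

locale game =
  fixes n :: nat and f :: "nat \<Rightarrow> real \<Rightarrow> real" and mu :: "nat set \<Rightarrow> real"
  assumes mono: "\<forall>j\<in>{1..n}. mono_on {0..} (f j)"
    and cont: "\<forall>j\<in>{1..n}. continuous_on {0..} (f j)"
    and nn: "\<forall>R. R \<noteq> {} \<and> R \<subseteq> {1..n} \<longrightarrow> 0 \<le> mu R"
begin

lemma monoD': "k \<in> {1..n} \<Longrightarrow> 0 \<le> x \<Longrightarrow> x \<le> y \<Longrightarrow> f k x \<le> f k y"
  using mono by (meson atLeast_iff mono_onD order_trans)

lemma uniq:
  assumes "S \<subseteq> {1..n}" "S \<noteq> {}"
    and "\<forall>k\<in>S. 0 \<le> x k" "\<forall>k\<in>S. f k (x k) = c"
    and "\<forall>k\<in>S. 0 \<le> y k" "\<forall>k\<in>S. f k (y k) = c'"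
    and "sum x S = sum y S"
  shows "c = c'"
proof -
  have fin: "finite S" using assms(1) finite_subset by blast
  have lt: False if "c < c'" "\<forall>k\<in>S. 0 \<le> x k" "\<forall>k\<in>S. f k (x k) = c"
    "\<forall>k\<in>S. 0 \<le> y k" "\<forall>k\<in>S. f k (y k) = c'" "sum x S = sum y S" for c c' x y
  proof -
    have "x k < y k" if "k \<in> S" for k
    proof (rule ccontr)
      assume "\<not> x k < y k"
      hence "f k (y k) \<le> f k (x k)" using monoD'[of k "y k" "x k"] that assms(1) \<open>\<forall>k\<in>S. 0 \<le> y k\<close> by auto
      thus False using that \<open>c < c'\<close> \<open>\<forall>k\<in>S. f k (x k) = c\<close> \<open>\<forall>k\<in>S. f k (y k) = c'\<close> by auto
    qed
    hence "sum x S < sum y S" using sum_strict_mono[OF fin assms(2)] by blast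
    thus False using that by simp
  qed
  show ?thesis
  proof (rule ccontr)
    assume "c \<noteq> c'"
    hence "c < c' \<or> c' < c" by linarith
    thus False using lt assms by metis
  qed
qed

lemma eqz_Some_iff:
  assumes "S \<subseteq> {1..n}" "S \<noteq> {}"
  shows "eqz f S m = Some c \<longleftrightarrow> (\<exists>x. (\<forall>k\<in>S. 0 \<le> x k) \<and> sum x S = m \<and> (\<forall>k\<in>S. f k (x k) = c))"
proof
  assume H: "eqz f S m = Some c"
  hence ex: "\<exists>c x. (\<forall>k\<in>S. 0 \<le> x k) \<and> (\<Sum>k\<in>S. x k) = m \<and> (\<forall>k\<in>S. f k (x k) = c)"
    by (auto simp: eqz_def split: if_splits)
  hence "c = (SOME c. \<exists>x. (\<forall>k\<in>S. 0 \<le> x k) \<and> (\<Sum>k\<in>S. x k) = m \<and> (\<forall>k\<in>S. f k (x k) = c))"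
    using H by (simp add: eqz_def)
  thus "\<exists>x. (\<forall>k\<in>S. 0 \<le> x k) \<and> sum x S = m \<and> (\<forall>k\<in>S. f k (x k) = c)"
    using someI_ex[OF ex] by simp
next
  assume H: "\<exists>x. (\<forall>k\<in>S. 0 \<le> x k) \<and> sum x S = m \<and> (\<forall>k\<in>S. f k (x k) = c)"
  hence ex: "\<exists>c x. (\<forall>k\<in>S. 0 \<le> x k) \<and> (\<Sum>k\<in>S. x k) = m \<and> (\<forall>k\<in>S. f k (x k) = c)" by blast
  define c' where "c' = (SOME c. \<exists>x. (\<forall>k\<in>S. 0 \<le> x k) \<and> (\<Sum>k\<in>S. x k) = m \<and> (\<forall>k\<in>S. f k (x k) = c))"
  have "\<exists>x. (\<forall>k\<in>S. 0 \<le> x k) \<and> (\<Sum>k\<in>S. x k) = m \<and> (\<forall>k\<in>S. f k (x k) = c')"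
    using someI_ex[OF ex] unfolding c'_def .
  then obtain y where y: "\<forall>k\<in>S. 0 \<le> y k" "sum y S = m" "\<forall>k\<in>S. f k (y k) = c'" by blast
  obtain x where x: "\<forall>k\<in>S. 0 \<le> x k" "sum x S = m" "\<forall>k\<in>S. f k (x k) = c" using H by blast
  have "c = c'" using uniq[OF assms x(1) x(3) y(1) y(3)] x(2) y(2) by simp
  thus "eqz f S m = Some c" using ex by (simp add: eqz_def c'_def)
qed

lemma split_msum:
  assumes "S \<subseteq> {1..n}" "S' \<subseteq> S"
  shows "msum mu S = msum mu (S - S') + cross mu S S'"
proof -
  have fin: "finite {R. R \<subseteq> S}" using assms(1) finite_subset by auto
  have eq: "{R. R \<noteq> {} \<and> R \<subseteq> S} = {R. R \<noteq> {} \<and> R \<subseteq> S - S'} \<union> {R. R \<subseteq> S \<and> R \<inter> S' \<noteq> {}}"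
    by blast
  have "msum mu S = (\<Sum>R\<in>{R. R \<noteq> {} \<and> R \<subseteq> S - S'} \<union> {R. R \<subseteq> S \<and> R \<inter> S' \<noteq> {}}. mu R)"
    unfolding msum_def eq ..
  also have "\<dots> = msum mu (S - S') + cross mu S S'"
    unfolding msum_def cross_def
  proof (rule sum.union_disjoint)
    have fS: "finite (Pow S)" using assms(1) finite_subset by blast
    show "finite {R. R \<noteq> {} \<and> R \<subseteq> S - S'}" by (rule finite_subset[OF _ fS]) auto
    show "finite {R. R \<subseteq> S \<and> R \<inter> S' \<noteq> {}}" by (rule finite_subset[OF _ fS]) auto
  qed blast
  finally show ?thesis .
qed

lemma msum_empty: "msum mu {} = 0"
  by (simp add: msum_def)

lemma supermod:
  assumes "X \<subseteq> {1..n}" "Y \<subseteq> {1..n}"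
  shows "msum mu X + msum mu Y \<le> msum mu (X \<union> Y) + msum mu (X \<inter> Y)"
proof -
  define F where "F (Z::nat set) = {R. R \<noteq> {} \<and> R \<subseteq> Z}" for Z
  have m: "msum mu Z = sum mu (F Z)" for Z by (simp add: msum_def F_def)
  have finF: "finite (F Z)" if "Z \<subseteq> {1..n}" for Z
  proof (rule finite_subset[of _ "Pow {1..n}"])
    show "F Z \<subseteq> Pow {1..n}" using that unfolding F_def by blast
  qed simp
  have e1: "sum mu (F X) + sum mu (F Y) = sum mu (F X \<union> F Y) + sum mu (F X \<inter> F Y)"
    using sum.union_inter[OF finF[OF assms(1)] finF[OF assms(2)], of mu] by linarith
  have e2: "F X \<inter> F Y = F (X \<inter> Y)" unfolding F_def by blast
  have XYU: "X \<union> Y \<subseteq> {1..n}" using assms by blast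
  have sub: "F X \<union> F Y \<subseteq> F (X \<union> Y)" unfolding F_def by blast
  have nn': "\<forall>R\<in>F (X \<union> Y) - (F X \<union> F Y). 0 \<le> mu R"
  proof
    fix R assume "R \<in> F (X \<union> Y) - (F X \<union> F Y)"
    hence "R \<noteq> {}" "R \<subseteq> {1..n}" using XYU unfolding F_def by blast+
    thus "0 \<le> mu R" using nn by blast
  qed
  have le: "sum mu (F X \<union> F Y) \<le> sum mu (F (X \<union> Y))"
    using sum_mono2[OF finF[OF XYU] sub] nn' by blast
  show ?thesis unfolding m using e1 le unfolding e2 by linarith
qed

lemma DC:
  shows "S \<noteq> {} \<Longrightarrow> S \<subseteq> {1..n} \<Longrightarrow> E_G f mu S = Some c \<Longrightarrow> \<exists>S0\<in>D_G n f mu. c \<le> the (E_G f mu S0)"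
proof (induction "card S" arbitrary: S c rule: less_induct)
  case less
  show ?case
  proof (cases "M_G f mu S = {}")
    case True
    hence "S \<in> D_G n f mu" using less.prems by (simp add: D_G_def)
    thus ?thesis using less.prems by force
  next
    case False
    then obtain S' where S': "S' \<noteq> {}" "S' \<subseteq> S"
      "\<forall>m. 0 \<le> m \<and> m \<le> cross mu S S' \<longrightarrow> eqz f S' m \<noteq> E_G f mu S"
      unfolding M_G_cross by blast
    have U: "S' \<subseteq> {1..n}" using S'(2) less.prems by blast
    have fin: "finite S" using less.prems finite_subset by blast
    obtain x where x: "\<forall>k\<in>S. 0 \<le> x k" "sum x S = msum mu S" "\<forall>k\<in>S. f k (x k) = c"
      using less.prems eqz_Some_iff[OF less.prems(2) less.prems(1)] by (auto simp: E_G_msum)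
    have gt: "cross mu S S' < sum x S'"
    proof (rule ccontr)
      assume "\<not> cross mu S S' < sum x S'"
      moreover have "0 \<le> sum x S'" using x(1) S'(2) by (auto intro: sum_nonneg)
      moreover have "eqz f S' (sum x S') = Some c"
        using eqz_Some_iff[OF U S'(1)] x S'(2) by blast
      ultimately show False using S'(3) less.prems(3) by force
    qed
    define T where "T = S - S'"
    have sT: "msum mu T = msum mu S - cross mu S S'"
      using split_msum[OF less.prems(2) S'(2)] by (simp add: T_def)
    have sxT: "sum x T = sum x S - sum x S'"
      unfolding T_def using sum_diff[OF fin S'(2)] .
    have lt: "sum x T < msum mu T" using sT sxT gt x(2) by simp
    have Tne: "T \<noteq> {}" using lt msum_empty by auto
    have TU: "T \<subseteq> {1..n}" using less.prems(2) by (auto simp: T_def)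
    have finT: "finite T" using fin by (simp add: T_def)
    have cardT: "card T < card S"
      using S' fin unfolding T_def by (metis Diff_disjoint Diff_subset Int_absorb2 psubset_card_mono psubsetI)
    obtain d y where dy: "c \<le> d" "\<forall>k\<in>T. 0 \<le> y k \<and> f k (y k) = d" "sum y T = msum mu T"
    proof -
      have "\<forall>k\<in>T. mono_on {0..} (f k)" "\<forall>k\<in>T. continuous_on {0..} (f k)"
        using mono cont TU by blast+
      moreover have "\<forall>k\<in>T. 0 \<le> x k" "\<forall>k\<in>T. f k (x k) = c" using x by (auto simp: T_def)
      ultimately show ?thesis using ex_level[OF finT Tne, of f x c "msum mu T"] lt that by auto
    qed
    have "E_G f mu T = Some d"
      unfolding E_G_msum using eqz_Some_iff[OF TU Tne] dy by blast
    then obtain S0 where "S0 \<in> D_G n f mu" "d \<le> the (E_G f mu S0)"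
      using less.hyps[OF cardT Tne TU] by blast
    thus ?thesis using dy(1) by force
  qed
qed


lemma single_D: assumes "j \<in> {1..n}" shows "{j} \<in> D_G n f mu"
proof -
  have fam: "{R. R \<noteq> {} \<and> R \<subseteq> {j}} = {{j}}" by auto
  have fam2: "{R. R \<subseteq> {j} \<and> R \<inter> {j} \<noteq> {}} = {{j}}" by auto
  have m0: "0 \<le> mu {j}" using nn assms by auto
  have E: "E_G f mu {j} = Some (f j (mu {j}))"
  proof -
    have jU: "{j} \<subseteq> {1..n}" using assms by simp
    have "\<exists>x. (\<forall>k\<in>{j}. 0 \<le> x k) \<and> sum x {j} = mu {j} \<and> (\<forall>k\<in>{j}. f k (x k) = f j (mu {j}))"
      by (rule exI[of _ "\<lambda>_. mu {j}"]) (simp add: m0)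
    hence "eqz f {j} (mu {j}) = Some (f j (mu {j}))" using eqz_Some_iff[OF jU] by blast
    thus ?thesis unfolding E_G_def fam by simp
  qed
  have cr: "cross mu {j} {j} = mu {j}" unfolding cross_def fam2 by simp
  have eqE: "eqz f {j} (mu {j}) = E_G f mu {j}" using E by (simp add: E_G_def fam)
  have "M_G f mu {j} = {}"
  proof (rule ccontr)
    assume "M_G f mu {j} \<noteq> {}"
    then obtain S' where S': "S' \<noteq> {}" "S' \<subseteq> {j}"
      "\<forall>m. 0 \<le> m \<and> m \<le> cross mu {j} S' \<longrightarrow> eqz f S' m \<noteq> E_G f mu {j}"
      unfolding M_G_cross by blast
    have "S' = {j}" using S'(1,2) by blast
    hence "\<not> (0 \<le> mu {j} \<and> mu {j} \<le> cross mu {j} {j})" using S'(3) eqE by blast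
    thus False using cr m0 by simp
  qed
  thus ?thesis using E assms by (simp add: D_G_def)
qed

lemma union_max:
  fixes \<phi> :: "nat set \<Rightarrow> real"
  assumes sm: "\<And>X Y. X \<subseteq> {1..n} \<Longrightarrow> Y \<subseteq> {1..n} \<Longrightarrow> \<phi> X + \<phi> Y \<le> \<phi> (X \<union> Y) + \<phi> (X \<inter> Y)"
    and S1: "S1 \<subseteq> {1..n}" "\<forall>T. T \<subseteq> S1 \<longrightarrow> \<phi> T \<le> \<phi> S1"
    and S2: "S2 \<subseteq> {1..n}" "\<forall>T. T \<subseteq> S2 \<longrightarrow> \<phi> T \<le> \<phi> S2"
  shows "\<forall>T. T \<subseteq> S1 \<union> S2 \<longrightarrow> \<phi> T \<le> \<phi> (S1 \<union> S2)"
proof (intro allI impI)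
  fix T assume T: "T \<subseteq> S1 \<union> S2"
  have TU: "T \<subseteq> {1..n}" using T S1 S2 by blast
  have "\<phi> T + \<phi> S1 \<le> \<phi> (T \<union> S1) + \<phi> (T \<inter> S1)" using sm[OF TU S1(1)] .
  moreover have "\<phi> (T \<inter> S1) \<le> \<phi> S1" using S1(2) by blast
  ultimately have 1: "\<phi> T \<le> \<phi> (T \<union> S1)" by simp
  have "\<phi> (T \<union> S1) + \<phi> S2 \<le> \<phi> (T \<union> S1 \<union> S2) + \<phi> ((T \<union> S1) \<inter> S2)"
    using sm[of "T \<union> S1" S2] TU S1 S2 by blast
  moreover have "\<phi> ((T \<union> S1) \<inter> S2) \<le> \<phi> S2" using S2(2) by blast
  moreover have "T \<union> S1 \<union> S2 = S1 \<union> S2" using T by blast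
  ultimately have "\<phi> (T \<union> S1) \<le> \<phi> (S1 \<union> S2)" by simp
  thus "\<phi> T \<le> \<phi> (S1 \<union> S2)" using 1 by simp
qed

lemma union_max_fam:
  fixes \<phi> :: "nat set \<Rightarrow> real"
  assumes sm: "\<And>X Y. X \<subseteq> {1..n} \<Longrightarrow> Y \<subseteq> {1..n} \<Longrightarrow> \<phi> X + \<phi> Y \<le> \<phi> (X \<union> Y) + \<phi> (X \<inter> Y)"
    and fin: "finite F" and ne: "F \<noteq> {}"
    and H: "\<forall>S\<in>F. S \<subseteq> {1..n} \<and> (\<forall>T. T \<subseteq> S \<longrightarrow> \<phi> T \<le> \<phi> S)"
  shows "\<forall>T. T \<subseteq> \<Union>F \<longrightarrow> \<phi> T \<le> \<phi> (\<Union>F)"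
  using fin ne H
proof (induction F rule: finite_ne_induct)
  case (singleton x) thus ?case by simp
next
  case (insert x F)
  have U: "\<Union>F \<subseteq> {1..n}" using insert.prems by blast
  have x: "x \<subseteq> {1..n}" "\<forall>T. T \<subseteq> x \<longrightarrow> \<phi> T \<le> \<phi> x" using insert.prems by blast+
  have IH: "\<forall>T. T \<subseteq> \<Union>F \<longrightarrow> \<phi> T \<le> \<phi> (\<Union>F)" using insert.IH insert.prems by blast
  have "\<Union>(insert x F) = x \<union> \<Union>F" by simp
  thus ?case using union_max[OF sm x U IH] by simp
qed

lemma main: "P_G n f mu \<in> D_G n f mu \<and> E_G f mu (P_G n f mu) = Some (h_G n f mu)"
  if n1: "1 \<le> n"
proof -
  define D where "D = D_G n f mu"
  define h where "h = h_G n f mu"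
  have finD: "finite D" by (rule finite_subset[of _ "Pow {1..n}"]) (auto simp: D_def D_G_def)
  have neD: "D \<noteq> {}" using single_D[of 1] n1 by (auto simp: D_def)
  have hmax: "h = Max ((\<lambda>S. the (E_G f mu S)) ` D)" by (simp add: h_def h_G_def D_def)
  have "h \<in> (\<lambda>S. the (E_G f mu S)) ` D"
    using Max_in[of "(\<lambda>S. the (E_G f mu S)) ` D"] finD neD hmax by auto
  then obtain S1 where S1: "S1 \<in> D" "the (E_G f mu S1) = h" by auto
  have le_h: "the (E_G f mu S) \<le> h" if "S \<in> D" for S
    using Max_ge[of "(\<lambda>S. the (E_G f mu S)) ` D"] finD that hmax by auto
  define Fam where "Fam = {S \<in> D. E_G f mu S = Some h}"
  have P: "P_G n f mu = \<Union>Fam" by (simp add: P_G_def Fam_def D_def h_def)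
  have S1F: "S1 \<in> Fam" using S1 by (cases "E_G f mu S1") (auto simp: Fam_def D_def D_G_def)
  have finF: "finite Fam" using finD by (simp add: Fam_def)
  have FU: "S \<subseteq> {1..n} \<and> S \<noteq> {} \<and> M_G f mu S = {} \<and> E_G f mu S = Some h" if "S \<in> Fam" for S
    using that by (auto simp: Fam_def D_def D_G_def)
  define PP where "PP = \<Union>Fam"
  have PU: "PP \<subseteq> {1..n}"
  proof
    fix k assume "k \<in> PP"
    then obtain S where "S \<in> Fam" "k \<in> S" unfolding PP_def by blast
    thus "k \<in> {1..n}" using FU[of S] by blast
  qed
  have "S1 \<subseteq> PP" using S1F unfolding PP_def by blast
  hence Pne: "PP \<noteq> {}" using FU[OF S1F] by blast
  have finP: "finite PP" using PU finite_subset by blast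
  have att: "\<exists>x. 0 \<le> x \<and> f k x = h" if kP: "k \<in> PP" for k
  proof -
    obtain S where S: "S \<in> Fam" "k \<in> S" using kP unfolding PP_def by blast
    have SU: "S \<subseteq> {1..n}" "S \<noteq> {}" "eqz f S (msum mu S) = Some h"
      using FU[OF S(1)] by (simp_all add: E_G_msum)
    then obtain x where "\<forall>k\<in>S. 0 \<le> x k" "\<forall>k\<in>S. f k (x k) = h"
      using eqz_Some_iff[OF SU(1,2)] by blast
    thus ?thesis using S by blast
  qed
  define A where "A k = Inf {x. 0 \<le> x \<and> f k x = h}" for k
  have A: "0 \<le> A k \<and> f k (A k) = h \<and> (\<forall>x. 0 \<le> x \<and> f k x = h \<longrightarrow> A k \<le> x)" if "k \<in> PP" for k
  proof -
    have kU: "k \<in> {1..n}" using that PU by blast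
    have cl: "closed {x \<in> {0..}. f k x = h}"
      by (rule continuous_closed_preimage_constant) (use cont kU in auto)
    have eq: "{x. 0 \<le> x \<and> f k x = h} = {x \<in> {0..}. f k x = h}" by auto
    have ne: "{x. 0 \<le> x \<and> f k x = h} \<noteq> {}" using att[OF that] by auto
    have bb: "bdd_below {x. 0 \<le> x \<and> f k x = h}" by (rule bdd_belowI[of _ 0]) auto
    have "A k \<in> {x. 0 \<le> x \<and> f k x = h}" unfolding A_def
      by (rule closed_contains_Inf[OF ne bb]) (subst eq, rule cl)
    moreover have "\<forall>x. 0 \<le> x \<and> f k x = h \<longrightarrow> A k \<le> x"
    proof (intro allI impI)
      fix x assume "0 \<le> x \<and> f k x = h"
      hence "x \<in> {x. 0 \<le> x \<and> f k x = h}" by simp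
      thus "A k \<le> x" unfolding A_def by (rule cInf_lower[OF _ bb])
    qed
    ultimately show ?thesis by simp
  qed
  define \<phi> where "\<phi> T = msum mu T - sum A T" for T
  have sm: "\<phi> X + \<phi> Y \<le> \<phi> (X \<union> Y) + \<phi> (X \<inter> Y)" if "X \<subseteq> {1..n}" "Y \<subseteq> {1..n}" for X Y
  proof -
    have fX: "finite X" "finite Y" using that finite_subset by auto
    have "sum A X + sum A Y = sum A (X \<union> Y) + sum A (X \<inter> Y)" using sum.union_inter[OF fX, of A] by linarith
    thus ?thesis using supermod[OF that] unfolding \<phi>_def by linarith
  qed
  \<comment> \<open>Hall condition in terms of phi\<close>
  have hall_iff: "\<phi> (S - S') \<le> \<phi> S \<longleftrightarrow> sum A S' \<le> cross mu S S'" if "S \<subseteq> {1..n}" "S' \<subseteq> S" for S S'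
  proof -
    have "finite S" using that finite_subset by blast
    hence "sum A (S - S') = sum A S - sum A S'" using sum_diff that(2) by blast
    thus ?thesis using split_msum[OF that] unfolding \<phi>_def by linarith
  qed
  have Fmax: "\<forall>S\<in>Fam. S \<subseteq> {1..n} \<and> (\<forall>T. T \<subseteq> S \<longrightarrow> \<phi> T \<le> \<phi> S)"
  proof (intro ballI conjI allI impI)
    fix S assume SF: "S \<in> Fam"
    show SU: "S \<subseteq> {1..n}" using FU[OF SF] by blast
    fix T assume TS: "T \<subseteq> S"
    show "\<phi> T \<le> \<phi> S"
    proof (cases "T = S")
      case False
      define S' where "S' = S - T"
      have S'ne: "S' \<noteq> {}" "S' \<subseteq> S" using TS False by (auto simp: S'_def)
      have TT: "S - S' = T" using TS by (auto simp: S'_def)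
      have "S' \<notin> M_G f mu S" using FU[OF SF] by simp
      hence "\<not> (\<forall>m. 0 \<le> m \<and> m \<le> cross mu S S' \<longrightarrow> eqz f S' m \<noteq> E_G f mu S)"
        using S'ne unfolding M_G_cross by blast
      then obtain m where m: "0 \<le> m" "m \<le> cross mu S S'" "eqz f S' m = E_G f mu S"
        by blast
      hence m3: "eqz f S' m = Some h" using FU[OF SF] by simp
      have S'U: "S' \<subseteq> {1..n}" using S'ne SU by blast
      obtain x where x: "\<forall>k\<in>S'. 0 \<le> x k" "sum x S' = m" "\<forall>k\<in>S'. f k (x k) = h"
        using m3 eqz_Some_iff[OF S'U S'ne(1)] by blast
      have S'P: "S' \<subseteq> PP" using SF S'ne by (auto simp: PP_def)
      have "sum A S' \<le> sum x S'"
      proof (rule sum_mono)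
        fix k assume "k \<in> S'"
        thus "A k \<le> x k" using A[of k] x S'P by blast
      qed
      hence "sum A S' \<le> cross mu S S'" using x(2) m(2) by simp
      thus ?thesis using hall_iff[OF SU S'ne(2)] TT by simp
    qed simp
  qed
  have Pmax: "\<forall>T. T \<subseteq> PP \<longrightarrow> \<phi> T \<le> \<phi> PP"
    unfolding PP_def by (rule union_max_fam[OF sm finF _ Fmax]) (use S1F in auto)
  have "\<phi> {} \<le> \<phi> PP" using Pmax by blast
  hence sAP: "sum A PP \<le> msum mu PP" by (simp add: \<phi>_def msum_empty)
  obtain d y where dy: "h \<le> d" "\<forall>k\<in>PP. 0 \<le> y k \<and> f k (y k) = d" "sum y PP = msum mu PP"
  proof -
    have "\<forall>k\<in>PP. mono_on {0..} (f k)" "\<forall>k\<in>PP. continuous_on {0..} (f k)"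
      using mono cont PU by blast+
    moreover have "\<forall>k\<in>PP. 0 \<le> A k" "\<forall>k\<in>PP. f k (A k) = h" using A by blast+
    ultimately show ?thesis using ex_level[OF finP Pne, of f A h "msum mu PP"] sAP that by blast
  qed
  have EPd: "E_G f mu PP = Some d"
    unfolding E_G_msum using eqz_Some_iff[OF PU Pne] dy by blast
  obtain S0 where "S0 \<in> D_G n f mu" "d \<le> the (E_G f mu S0)"
    using DC[OF Pne PU EPd] by blast
  hence "d \<le> h" using le_h by (force simp: D_def)
  hence EP: "E_G f mu PP = Some h" using EPd dy(1) by simp
  have "M_G f mu PP = {}"
  proof (rule ccontr)
    assume "M_G f mu PP \<noteq> {}"
    then obtain S' where S': "S' \<noteq> {}" "S' \<subseteq> PP"
      "\<forall>m. 0 \<le> m \<and> m \<le> cross mu PP S' \<longrightarrow> eqz f S' m \<noteq> E_G f mu PP"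
      unfolding M_G_cross by blast
    have "sum A S' \<le> cross mu PP S'" using hall_iff[OF PU S'(2)] Pmax by blast
    moreover have "0 \<le> sum A S'" using A S'(2) by (auto intro: sum_nonneg)
    moreover have "eqz f S' (sum A S') = Some h"
    proof -
      have S'U: "S' \<subseteq> {1..n}" using S'(2) PU by blast
      have "\<forall>k\<in>S'. 0 \<le> A k \<and> f k (A k) = h" using A S'(2) by blast
      thus ?thesis using eqz_Some_iff[OF S'U S'(1), of "sum A S'" h] by blast
    qed
    ultimately show False using S'(3) EP by auto
  qed
  hence "PP \<in> D_G n f mu" using EP PU Pne by (simp add: D_G_def)
  thus ?thesis using EP P by (simp add: PP_def h_def)
qed

end

theorem mainTheorem18:
  fixes n :: nat and f :: "nat \<Rightarrow> real \<Rightarrow> real" and mu :: "nat set \<Rightarrow> real"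
  assumes "1 \<le> n"
    and "\<forall>j\<in>{1..n}. mono_on {0..} (f j)"
    and "\<forall>j\<in>{1..n}. continuous_on {0..} (f j)"
    and "\<forall>R. R \<noteq> {} \<and> R \<subseteq> {1..n} \<longrightarrow> 0 \<le> mu R"
  shows "P_G n f mu \<in> D_G n f mu \<and> E_G f mu (P_G n f mu) = Some (h_G n f mu)"
proof -
  interpret game n f mu using assms(2-4) by unfold_locales
  show ?thesis using main assms(1) by blast
qed

end
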